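(* Let $\kappa$ be a regular uncountable cardinal with $\kappa^{<\kappa}=\kappa$ and $\gamma^\omega<\kappa$ for all $\gamma<\kappa$. There exists a linear order $I$ of size $\kappa$ which is $(<\kappa,bs)$-stable, $(\kappa,bs,bs)$-nice and $\kappa$-colorable.
   Context: For a linear order $A$ (language $\{<\}$), basic formulas are atomic formulas and their negations; for $a\in A$ (or a tuple) and $B\subseteq A$, $tp_{bs}(a,B,A)$ is the set of basic formulas with parameters from $B$ satisfied by $a$ in $A$. A $\kappa$-representation of a set $A$ with $|A|\le\kappa$ is an increasing continuous sequence $\langle A_\alpha\mid\alpha<\kappa\rangle$ of subsets of $A$, each of size $<\kappa$, with union $A$. For $a\in A$ and $B,D\subseteq A$, $tp_{bs}(a,B,A)$ $(bs,bs)$-splits over $D$ if there are $b_1,b_2\in B$ with $tp_{bs}(b_1,D,A)=tp_{bs}(b_2,D,A)$ but $tp_{bs}(a^\frown b_1,D,A)\ne tp_{bs}(a^\frown b_2,D,A)$. For a $\kappa$-representation $\mathbb A$, $Sp_{bs}(\mathbb A)$ is the set of limit $\delta<\kappa$ such that some $a\in A$ has $tp_{bs}(a,A_\delta,A)$ $(bs,bs)$-splitting over $A_\beta$ for every $\beta<\delta$. $A$ is $(\kappa,bs,bs)$-nice if $Sp_{bs}(\mathbb A)$ is non-stationary for a (equivalently every) $\kappa$-representation $\mathbb A$ of $A$. $A$ is $(<\kappa,bs)$-stable if for every $B\subseteq A$ with $|B|<\kappa$, $|\{tp_{bs}(a,B,A)\mid a\in A\}|<\kappa$. A linear order $I$ of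 size $\kappa$ is $\kappa$-colorable if there is $F:I\to\kappa$ such that for every $B\subseteq I$ with $|B|<\kappa$, every $b\in I\setminus B$ with $p=tp_{bs}(b,B,I)$, and every $\alpha<\kappa$, $|\{a\in I\mid a\text{ realizes }p,\ F(a)=\alpha\}|=\kappa$. *)

theory Defs
  imports Main
begin

unbundle cardinal_syntax

datatype 'a trm = Var nat | Par 'a
datatype 'a atom = AEq "'a trm" "'a trm" | ALess "'a trm" "'a trm"
datatype 'a bfml = Pos "'a atom" | Neg "'a atom"

fun trm_val :: "'a list \<Rightarrow> 'a trm \<Rightarrow> 'a" where
  "trm_val a (Var i) = a ! i"
| "trm_val a (Par b) = b"

fun trm_pars :: "'a trm \<Rightarrow> 'a set" where
  "trm_pars (Var i) = {}"
| "trm_pars (Par b) = {b}"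

fun trm_vars :: "'a trm \<Rightarrow> nat set" where
  "trm_vars (Var i) = {i}"
| "trm_vars (Par b) = {}"

fun atom_holds :: "'a rel \<Rightarrow> 'a list \<Rightarrow> 'a atom \<Rightarrow> bool" where
  "atom_holds L a (AEq s t) = (trm_val a s = trm_val a t)"
| "atom_holds L a (ALess s t) = ((trm_val a s, trm_val a t) \<in> L)"

fun atom_pars :: "'a atom \<Rightarrow> 'a set" where
  "atom_pars (AEq s t) = trm_pars s \<union> trm_pars t"
| "atom_pars (ALess s t) = trm_pars s \<union> trm_pars t"

fun atom_vars :: "'a atom \<Rightarrow> nat set" where
  "atom_vars (AEq s t) = trm_vars s \<union> trm_vars t"
| "atom_vars (ALess s t) = trm_vars s \<union> trm_vars t"

fun bf_holds :: "'a rel \<Rightarrow> 'a list \<Rightarrow> 'a bfml \<Rightarrow> bool" where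
  "bf_holds L a (Pos \<phi>) = atom_holds L a \<phi>"
| "bf_holds L a (Neg \<phi>) = (\<not> atom_holds L a \<phi>)"

fun bf_pars :: "'a bfml \<Rightarrow> 'a set" where
  "bf_pars (Pos \<phi>) = atom_pars \<phi>"
| "bf_pars (Neg \<phi>) = atom_pars \<phi>"

fun bf_vars :: "'a bfml \<Rightarrow> nat set" where
  "bf_vars (Pos \<phi>) = atom_vars \<phi>"
| "bf_vars (Neg \<phi>) = atom_vars \<phi>"

text \<open>tp_bs(a,B,A) for a tuple a (a list, variable i denotes a!i), in the
  linear order whose strict order relation is L.\<close>
definition tp_bs :: "'a rel \<Rightarrow> 'a list \<Rightarrow> 'a set \<Rightarrow> 'a bfml set" where
  "tp_bs L a B = {\<phi>. bf_pars \<phi> \<subseteq> B \<and> (\<forall>i\<in>bf_vars \<phi>. i < length a) \<and> bf_holds L a \<phi>}"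

definition bs_splits :: "'a rel \<Rightarrow> 'a \<Rightarrow> 'a set \<Rightarrow> 'a set \<Rightarrow> bool" where
  "bs_splits L a B D \<longleftrightarrow> (\<exists>b1\<in>B. \<exists>b2\<in>B. tp_bs L [b1] D = tp_bs L [b2] D
      \<and> tp_bs L [a, b1] D \<noteq> tp_bs L [a, b2] D)"

section \<open>Ordinals below kappa, represented by a cardinal order r (Field r = UNIV)\<close>

definition olt :: "'k rel \<Rightarrow> 'k \<Rightarrow> 'k \<Rightarrow> bool" where
  "olt r \<alpha> \<beta> \<longleftrightarrow> (\<alpha>, \<beta>) \<in> r \<and> \<alpha> \<noteq> \<beta>"

definition is_limit :: "'k rel \<Rightarrow> 'k \<Rightarrow> bool" where
  "is_limit r \<delta> \<longleftrightarrow> (\<exists>\<beta>. olt r \<beta> \<delta>) \<and> (\<forall>\<beta>. olt r \<beta> \<delta> \<longrightarrow> (\<exists>\<gamma>. olt r \<beta> \<gamma> \<and> olt r \<gamma> \<delta>))"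

definition club :: "'k rel \<Rightarrow> 'k set \<Rightarrow> bool" where
  "club r C \<longleftrightarrow> (\<forall>\<alpha>. \<exists>\<beta>\<in>C. (\<alpha>, \<beta>) \<in> r)
     \<and> (\<forall>\<delta>. is_limit r \<delta> \<and> (\<forall>\<beta>. olt r \<beta> \<delta> \<longrightarrow> (\<exists>\<gamma>\<in>C. olt r \<beta> \<gamma> \<and> olt r \<gamma> \<delta>)) \<longrightarrow> \<delta> \<in> C)"

definition stationary :: "'k rel \<Rightarrow> 'k set \<Rightarrow> bool" where
  "stationary r S \<longleftrightarrow> (\<forall>C. club r C \<longrightarrow> S \<inter> C \<noteq> {})"

definition kappa_rep :: "'k rel \<Rightarrow> 'a set \<Rightarrow> ('k \<Rightarrow> 'a set) \<Rightarrow> bool" where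
  "kappa_rep r A As \<longleftrightarrow>
     (\<forall>\<alpha>. As \<alpha> \<subseteq> A \<and> |As \<alpha>| <o r)
   \<and> (\<forall>\<alpha> \<beta>. (\<alpha>, \<beta>) \<in> r \<longrightarrow> As \<alpha> \<subseteq> As \<beta>)
   \<and> (\<forall>\<delta>. is_limit r \<delta> \<longrightarrow> As \<delta> = (\<Union>\<beta>\<in>{\<beta>. olt r \<beta> \<delta>}. As \<beta>))
   \<and> (\<Union>\<alpha>. As \<alpha>) = A"

definition Sp_bs :: "'k rel \<Rightarrow> 'a rel \<Rightarrow> 'a set \<Rightarrow> ('k \<Rightarrow> 'a set) \<Rightarrow> 'k set" where
  "Sp_bs r L A As = {\<delta>. is_limit r \<delta> \<and>
     (\<exists>a\<in>A. \<forall>\<beta>. olt r \<beta> \<delta> \<longrightarrow> bs_splits L a (As \<delta>) (As \<beta>))}"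

definition nice_bs :: "'k rel \<Rightarrow> 'a set \<Rightarrow> 'a rel \<Rightarrow> bool" where
  "nice_bs r A L \<longleftrightarrow> (\<forall>As. kappa_rep r A As \<longrightarrow> \<not> stationary r (Sp_bs r L A As))"

definition stable_bs :: "'k rel \<Rightarrow> 'a set \<Rightarrow> 'a rel \<Rightarrow> bool" where
  "stable_bs r A L \<longleftrightarrow> (\<forall>B. B \<subseteq> A \<and> |B| <o r \<longrightarrow> |{tp_bs L [a] B | a. a \<in> A}| <o r)"

definition colorable :: "'k rel \<Rightarrow> 'a set \<Rightarrow> 'a rel \<Rightarrow> bool" where
  "colorable r I L \<longleftrightarrow> (\<exists>F :: 'a \<Rightarrow> 'k. \<forall>B. B \<subseteq> I \<and> |B| <o r \<longrightarrow>
     (\<forall>b\<in>I - B. \<forall>\<alpha>. |{a\<in>I. tp_bs L [a] B = tp_bs L [b] B \<and> F a = \<alpha>}| =o r))"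

end

theory Submission
  imports Defs
begin


lemma tp_eqI:
  assumes "length u = length v"
    and "\<And>s t. trm_pars s \<subseteq> D \<Longrightarrow> trm_vars s \<subseteq> {..<length u} \<Longrightarrow>
              trm_pars t \<subseteq> D \<Longrightarrow> trm_vars t \<subseteq> {..<length u} \<Longrightarrow>
      (trm_val u s = trm_val u t \<longleftrightarrow> trm_val v s = trm_val v t) \<and>
      ((trm_val u s, trm_val u t) \<in> L \<longleftrightarrow> (trm_val v s, trm_val v t) \<in> L)"
  shows "tp_bs L u D = tp_bs L v D"
proof -
  have "bf_holds L u \<phi> = bf_holds L v \<phi>" if "bf_pars \<phi> \<subseteq> D" "\<forall>i\<in>bf_vars \<phi>. i < length u" for \<phi>
  proof -
    have "atom_holds L u a = atom_holds L v a" if "atom_pars a \<subseteq> D" "\<forall>i\<in>atom_vars a. i < length u" for a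
      using that assms(2) by (cases a) (auto simp: subset_iff)
    then show ?thesis using that by (cases \<phi>) auto
  qed
  then show ?thesis unfolding tp_bs_def using assms(1) by auto
qed

lemma trm1_cases:
  assumes "trm_pars s \<subseteq> D" "trm_vars s \<subseteq> {..<Suc 0}"
  shows "s = Var 0 \<or> (\<exists>d\<in>D. s = Par d)"
  using assms by (cases s) auto

lemma trm2_cases:
  assumes "trm_pars s \<subseteq> D" "trm_vars s \<subseteq> {..<Suc (Suc 0)}"
  shows "s = Var 0 \<or> s = Var 1 \<or> (\<exists>d\<in>D. s = Par d)"
  using assms by (cases s) auto

lemma tp1_eq:
  assumes "\<And>d. d \<in> D \<Longrightarrow> (x = d \<longleftrightarrow> y = d) \<and> ((x,d)\<in>L \<longleftrightarrow> (y,d)\<in>L) \<and> ((d,x)\<in>L \<longleftrightarrow> (d,y)\<in>L)"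
    and "(x,x)\<in>L \<longleftrightarrow> (y,y)\<in>L"
  shows "tp_bs L [x] D = tp_bs L [y] D"
proof (rule tp_eqI)
  fix s t assume a: "trm_pars s \<subseteq> D" "trm_vars s \<subseteq> {..<length [x]}"
      "trm_pars t \<subseteq> D" "trm_vars t \<subseteq> {..<length [x]}"
  have "s = Var 0 \<or> (\<exists>d\<in>D. s = Par d)" "t = Var 0 \<or> (\<exists>d\<in>D. t = Par d)"
    using trm1_cases a by auto
  then show "(trm_val [x] s = trm_val [x] t \<longleftrightarrow> trm_val [y] s = trm_val [y] t) \<and>
      ((trm_val [x] s, trm_val [x] t) \<in> L \<longleftrightarrow> (trm_val [y] s, trm_val [y] t) \<in> L)"
    using assms(2) by (elim disjE bexE; simp add: assms(1); metis assms(1))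
qed simp

lemma tp1_facts:
  assumes "tp_bs L [x] D = tp_bs L [y] D" "d \<in> D"
  shows "(x = d \<longleftrightarrow> y = d) \<and> ((x,d)\<in>L \<longleftrightarrow> (y,d)\<in>L) \<and> ((d,x)\<in>L \<longleftrightarrow> (d,y)\<in>L)"
proof -
  have e: "\<phi> \<in> tp_bs L [x] D \<longleftrightarrow> \<phi> \<in> tp_bs L [y] D" for \<phi> using assms by simp
  from e[of "Pos (AEq (Var 0) (Par d))"] e[of "Pos (ALess (Var 0) (Par d))"]
    e[of "Pos (ALess (Par d) (Var 0))"] assms(2)
  show ?thesis by (simp add: tp_bs_def)
qed

lemma tp1_self:
  assumes "tp_bs L [x] D = tp_bs L [y] D"
  shows "(x,x)\<in>L \<longleftrightarrow> (y,y)\<in>L"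
proof -
  have e: "\<phi> \<in> tp_bs L [x] D \<longleftrightarrow> \<phi> \<in> tp_bs L [y] D" for \<phi> using assms by simp
  from e[of "Pos (ALess (Var 0) (Var 0))"] show ?thesis by (simp add: tp_bs_def)
qed

lemma tp2_eq:
  assumes "tp_bs L [b1] D = tp_bs L [b2] D" "a = b1 \<longleftrightarrow> a = b2"
    "(a,b1)\<in>L \<longleftrightarrow> (a,b2)\<in>L" "(b1,a)\<in>L \<longleftrightarrow> (b2,a)\<in>L"
  shows "tp_bs L [a,b1] D = tp_bs L [a,b2] D"
proof (rule tp_eqI)
  fix s t assume a: "trm_pars s \<subseteq> D" "trm_vars s \<subseteq> {..<length [a,b1]}"
      "trm_pars t \<subseteq> D" "trm_vars t \<subseteq> {..<length [a,b1]}"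
  note f = tp1_facts[OF assms(1)] tp1_self[OF assms(1)]
  have "s = Var 0 \<or> s = Var 1 \<or> (\<exists>d\<in>D. s = Par d)" "t = Var 0 \<or> t = Var 1 \<or> (\<exists>d\<in>D. t = Par d)"
    using trm2_cases a by auto
  then show "(trm_val [a,b1] s = trm_val [a,b1] t \<longleftrightarrow> trm_val [a,b2] s = trm_val [a,b2] t) \<and>
      ((trm_val [a,b1] s, trm_val [a,b1] t) \<in> L \<longleftrightarrow> (trm_val [a,b2] s, trm_val [a,b2] t) \<in> L)"
    using assms(2-4) f(2) by (elim disjE bexE; simp add: f(1); metis f(1) assms(2))
qed simp



fun kb :: "('k \<Rightarrow> 'k \<Rightarrow> bool) \<Rightarrow> 'k list \<Rightarrow> 'k list \<Rightarrow> bool" where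
  "kb lt [] t = False"
| "kb lt (x#s) [] = True"
| "kb lt (x#s) (y#t) = (lt x y \<or> (x = y \<and> kb lt s t))"

locale slo =
  fixes lt :: "'k \<Rightarrow> 'k \<Rightarrow> bool"
  assumes irr: "\<not> lt x x" and tr: "lt x y \<Longrightarrow> lt y z \<Longrightarrow> lt x z"
    and tot: "x \<noteq> y \<Longrightarrow> lt x y \<or> lt y x"
begin

lemma asy: "lt x y \<Longrightarrow> \<not> lt y x" using irr tr by blast

lemma kb_irr: "\<not> kb lt s s"
  by (induction s) (auto simp: irr)

lemma kb_trans: "kb lt s t \<Longrightarrow> kb lt t u \<Longrightarrow> kb lt s u"
proof (induction s arbitrary: t u)
  case Nil then show ?case by simp
next
  case (Cons x s)
  then show ?case
    by (cases t; cases u) (auto intro: tr)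
qed

lemma kb_asym: "kb lt s t \<Longrightarrow> \<not> kb lt t s"
  using kb_trans kb_irr by blast

lemma kb_total: "s \<noteq> t \<Longrightarrow> kb lt s t \<or> kb lt t s"
proof (induction s arbitrary: t)
  case Nil then show ?case by (cases t) auto
next
  case (Cons x s)
  then show ?case by (cases t) (auto dest: tot)
qed

lemma kb_append: "kb lt (p @ u) (p @ v) = kb lt u v"
  by (induction p) (auto simp: irr)

lemma kb_ext: "u \<noteq> [] \<Longrightarrow> kb lt (p @ u) p"
  using kb_append[of p u "[]"] by (cases u) auto

lemma kb_notpre:
  assumes "\<not> (\<exists>u. c = p @ u)"
  shows "kb lt c (p @ v) = kb lt c p \<and> kb lt (p @ v) c = kb lt p c"
  using assms
proof (induction p arbitrary: c)
  case Nil then show ?case by simp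
next
  case (Cons y p)
  show ?case
  proof (cases c)
    case Nil then show ?thesis by simp
  next
    case (Cons x c')
    show ?thesis
    proof (cases "x = y")
      case True
      then have "\<not> (\<exists>u. c' = p @ u)" using Cons.prems Cons by auto
      then show ?thesis using Cons.IH Cons True by auto
    next
      case False then show ?thesis using Cons by auto
    qed
  qed
qed

end


locale kctx =
  fixes r :: "'k rel"
  assumes co: "card_order r" and reg: "regularCard r" and unc: "natLeq <o r"
begin

lemma Fr: "Field r = UNIV" and CO: "Card_order r"
  using card_order_on_Card_order[OF co] by auto

lemma WO: "Well_order r" using CO card_order_on_well_order_on by blast

lemma inf: "\<not> finite (Field r)"
proof
  assume "finite (Field r)"
  then have "|Field r| <o natLeq" using finite_iff_ordLess_natLeq by blast
  moreover have "|Field r| =o r" using card_of_Field_ordIso[OF CO] .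
  ultimately have "r <o natLeq" using ordIso_symmetric ordIso_ordLess_trans by blast
  with unc show False using ordLess_transitive ordLess_irreflexive by blast
qed

lemma stab: "stable r" using regularCard_stable[OF CO inf reg] .

abbreviation small :: "'b set \<Rightarrow> bool" where "small X \<equiv> |X| <o r"

lemma small_finite: "finite X \<Longrightarrow> small X"
  using finite_iff_ordLess_natLeq unc ordLess_transitive by blast

lemma small_subset: "small Y \<Longrightarrow> X \<subseteq> Y \<Longrightarrow> small X"
  using card_of_mono1 ordLeq_ordLess_trans by blast

lemma small_image: "small X \<Longrightarrow> small (f ` X)"
  using card_of_image ordLeq_ordLess_trans by blast

lemma small_Un: "small X \<Longrightarrow> small Y \<Longrightarrow> small (X \<union> Y)"
  using card_of_Un_ordLess_infinite_Field[OF inf CO] by blast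

lemma small_UN: "small A \<Longrightarrow> (\<And>a. a \<in> A \<Longrightarrow> small (F a)) \<Longrightarrow> small (\<Union>a\<in>A. F a)"
  using stable_UNION[OF stab] by blast

lemma small_Times: "small A \<Longrightarrow> small B \<Longrightarrow> small (A \<times> B)"
proof -
  assume a: "small A" "small B"
  have "A \<times> B = (\<Union>a\<in>A. (\<lambda>b. (a,b)) ` B)" by auto
  moreover have "small (\<Union>a\<in>A. (\<lambda>b. (a,b)) ` B)"
    using a by (intro small_UN small_image) auto
  ultimately show ?thesis by simp
qed

lemma small_nat: "small (UNIV :: nat set)"
  using card_of_nat unc ordIso_ordLess_trans by blast

lemma UNIV_iso: "|UNIV :: 'k set| =o r"
  using card_of_Field_ordIso[OF CO] Fr by simp

lemma not_small_UNIV: "\<not> small (UNIV :: 'k set)"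
  using UNIV_iso not_ordLess_ordIso by blast

lemma big_ge: "\<not> small X \<Longrightarrow> r \<le>o |X|"
  using not_ordLess_iff_ordLeq[OF WO card_of_Well_order] by blast

lemma olt_slo: "slo (olt r)"
proof
  have wo: "well_order_on UNIV r" using WO Fr by simp
  then have lin: "linear_order_on UNIV r" and w: "wf (r - Id)" by (auto simp: well_order_on_def)
  then have t: "trans r" and an: "antisym r" and tot: "total_on UNIV r"
    by (auto simp: linear_order_on_def partial_order_on_def preorder_on_def)
  show "\<not> olt r x x" for x by (simp add: olt_def)
  show "olt r x z" if "olt r x y" "olt r y z" for x y z
    using that t an unfolding olt_def trans_def antisym_def by blast
  show "olt r x y \<or> olt r y x" if "x \<noteq> y" for x y
    using that tot unfolding olt_def total_on_def by blast
qed

lemma olt_wf: "wf {(x,y). olt r x y}"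
proof -
  have "wf (r - Id)" using WO Fr by (simp add: well_order_on_def)
  moreover have "{(x,y). olt r x y} = r - Id" by (auto simp: olt_def)
  ultimately show ?thesis by simp
qed

lemma olt_min: assumes "Q x" shows "\<exists>z. Q z \<and> (\<forall>y. Q y \<longrightarrow> \<not> olt r y z)"
proof -
  obtain z where "z \<in> {x. Q x}" "\<And>y. (y,z) \<in> {(x,y). olt r x y} \<Longrightarrow> y \<notin> {x. Q x}"
    using wfE_min[OF olt_wf, of x "{x. Q x}"] assms by blast
  then show ?thesis by blast
qed

lemma small_notabove: "small {\<eta>. \<not> olt r \<gamma> \<eta>}"
proof -
  interpret slo "olt r" by (rule olt_slo)
  have "{\<eta>. \<not> olt r \<gamma> \<eta>} \<subseteq> underS r \<gamma> \<union> {\<gamma>}"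
    using tot by (auto simp: underS_def olt_def)
  moreover have "small (underS r \<gamma> \<union> {\<gamma>})"
    using small_Un[OF card_of_underS[OF CO, of \<gamma>] small_finite[of "{\<gamma>}"]] Fr by auto
  ultimately show ?thesis using small_subset by blast
qed

lemma not_small_above: "\<not> small {\<eta>. olt r \<gamma> \<eta>}"
proof
  assume "small {\<eta>. olt r \<gamma> \<eta>}"
  then have "small ({\<eta>. olt r \<gamma> \<eta>} \<union> {\<eta>. \<not> olt r \<gamma> \<eta>})"
    using small_notabove small_Un by blast
  moreover have "{\<eta>. olt r \<gamma> \<eta>} \<union> {\<eta>. \<not> olt r \<gamma> \<eta>} = UNIV" by auto
  ultimately show False using not_small_UNIV by simp
qed

lemma exists_above: "\<exists>\<eta>. olt r \<gamma> \<eta>"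
proof (rule ccontr)
  assume "\<not> (\<exists>\<eta>. olt r \<gamma> \<eta>)"
  then have "{\<eta>. olt r \<gamma> \<eta>} = {}" by blast
  then show False using not_small_above[of \<gamma>] small_finite[of "{}::'k set"] by simp
qed

lemma bound: "small K \<Longrightarrow> \<exists>\<gamma>. \<forall>k\<in>K. \<not> olt r \<gamma> k"
proof (rule ccontr)
  assume s: "small K" and n: "\<not> (\<exists>\<gamma>. \<forall>k\<in>K. \<not> olt r \<gamma> k)"
  have "cofinal K r" unfolding cofinal_def
  proof
    fix a assume "a \<in> Field r"
    from n obtain k where "k \<in> K" "olt r a k" by blast
    then show "\<exists>b\<in>K. a \<noteq> b \<and> (a, b) \<in> r" unfolding olt_def by blast
  qed
  then have "|K| =o r" using reg Fr unfolding regularCard_def by blast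
  with s show False using not_ordLess_ordIso by blast
qed

end


definition pclosed :: "'k list set \<Rightarrow> bool" where
  "pclosed P \<longleftrightarrow> (\<forall>c\<in>P. \<forall>k. take k c \<in> P)"

context slo begin

definition dclosed :: "'k list set \<Rightarrow> bool" where
  "dclosed S \<longleftrightarrow> pclosed S \<and> (\<forall>s\<in>S. \<forall>k<length s. \<forall>\<xi>. \<not> lt (s!k) \<xi> \<longrightarrow> take k s @ [\<xi>] \<in> S)"

lemma take_Suc_app: "take (Suc (length p)) (p @ x # u) = p @ [x]"
  by simp

lemma sig_rel:
  assumes pc: "pclosed P" and s1: "s1 = p @ \<rho>1 # w1" and s2: "s2 = p @ \<rho>2 # w2"
    and n1: "p@[\<rho>1] \<notin> P" and n2: "p@[\<rho>2] \<notin> P"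
    and cut: "\<And>\<xi>. p@[\<xi>] \<in> P \<Longrightarrow> (lt \<rho>1 \<xi> \<longleftrightarrow> lt \<rho>2 \<xi>)" and c: "c \<in> P"
  shows "(kb lt s1 c \<longleftrightarrow> kb lt s2 c) \<and> (kb lt c s1 \<longleftrightarrow> kb lt c s2) \<and> (c = s1 \<longleftrightarrow> c = s2)"
proof -
  have ne1: "c \<noteq> s1"
  proof
    assume "c = s1"
    then have "take (Suc (length p)) c \<in> P" using pc c unfolding pclosed_def by blast
    with \<open>c = s1\<close> s1 n1 show False by simp
  qed
  have ne2: "c \<noteq> s2"
  proof
    assume "c = s2"
    then have "take (Suc (length p)) c \<in> P" using pc c unfolding pclosed_def by blast
    with \<open>c = s2\<close> s2 n2 show False by simp
  qed
  show ?thesis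
  proof (cases "\<exists>u. c = p @ u")
    case True
    then obtain u where u: "c = p @ u" by blast
    show ?thesis
    proof (cases u)
      case Nil
      have "kb lt s1 p" "kb lt s2 p" using kb_ext s1 s2 by auto
      then show ?thesis using u Nil ne1 ne2 kb_asym by auto
    next
      case (Cons \<xi> u')
      have "take (Suc (length p)) c \<in> P" using pc c unfolding pclosed_def by blast
      then have xi: "p @ [\<xi>] \<in> P" using u Cons by simp
      then have "\<xi> \<noteq> \<rho>1" "\<xi> \<noteq> \<rho>2" using n1 n2 by auto
      then have "kb lt s1 c = lt \<rho>1 \<xi>" "kb lt s2 c = lt \<rho>2 \<xi>"
        "kb lt c s1 = lt \<xi> \<rho>1" "kb lt c s2 = lt \<xi> \<rho>2"
        using s1 s2 u Cons kb_append by auto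
      moreover have "lt \<xi> \<rho>1 = (\<not> lt \<rho>1 \<xi>)" "lt \<xi> \<rho>2 = (\<not> lt \<rho>2 \<xi>)"
        using \<open>\<xi> \<noteq> \<rho>1\<close> \<open>\<xi> \<noteq> \<rho>2\<close> tot asy by blast+
      ultimately show ?thesis using cut[OF xi] ne1 ne2 by simp
    qed
  next
    case False
    then show ?thesis using kb_notpre[OF False, of "\<rho>1 # w1"] kb_notpre[OF False, of "\<rho>2 # w2"]
      s1 s2 ne1 ne2 by simp
  qed
qed

lemma nosplit_list:
  assumes dc: "dclosed S" and sa: "sa = p @ \<rho> # w" and np: "p@[\<rho>] \<notin> S"
    and c1: "c1 \<in> S" and c2: "c2 \<in> S" and l1: "kb lt c1 sa" and l2: "kb lt sa c2"
    and e: "c1 = p \<longleftrightarrow> c2 = p" and f: "kb lt c1 p \<longleftrightarrow> kb lt c2 p"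
  shows False
proof -
  have pc: "pclosed S" using dc by (simp add: dclosed_def)
  have sap: "kb lt sa p" using kb_ext sa by auto
  have c2np: "\<not> (\<exists>u. c2 = p @ u)"
  proof
    assume "\<exists>u. c2 = p @ u"
    then obtain u where u: "c2 = p @ u" by blast
    show False
    proof (cases u)
      case Nil
      then have "c1 = p" using u e by simp
      then show False using l1 sap kb_asym by blast
    next
      case (Cons \<xi> u')
      have "kb lt (\<rho> # w) (\<xi> # u')" using l2 sa u Cons kb_append by simp
      then have "lt \<rho> \<xi> \<or> \<rho> = \<xi>" by auto
      moreover have "take (Suc (length p)) c2 \<in> S" using pc c2 unfolding pclosed_def by blast
      then have "p @ [\<xi>] \<in> S" using u Cons by simp
      moreover have "p @ [\<rho>] \<in> S" if "lt \<rho> \<xi>"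
      proof -
        have d: "\<forall>s\<in>S. \<forall>k<length s. \<forall>\<xi>. \<not> lt (s!k) \<xi> \<longrightarrow> take k s @ [\<xi>] \<in> S"
          using dc unfolding dclosed_def by blast
        have "length p < length c2" "c2 ! length p = \<xi>" "take (length p) c2 = p" using u Cons by auto
        moreover have "\<not> lt \<xi> \<rho>" using that asy by blast
        ultimately show ?thesis using d c2 by metis
      qed
      ultimately show False using np u by auto
    qed
  qed
  then have "kb lt p c2" using kb_notpre[OF c2np, of "\<rho> # w"] l2 sa by simp
  then have "\<not> kb lt c2 p" "c2 \<noteq> p" using kb_asym kb_irr by auto
  then have n1: "\<not> kb lt c1 p" "c1 \<noteq> p" using e f by auto
  show False
  proof (cases "\<exists>u. c1 = p @ u")
    case True
    then obtain u where "c1 = p @ u" by blast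
    then show False using n1 kb_ext by (cases u) auto
  next
    case False
    then show False using kb_notpre[OF False, of "\<rho> # w"] l1 sa n1 by simp
  qed
qed

lemma color_list:
  assumes nb: "sb \<notin> H" and hd: "\<And>u. u \<noteq> [] \<Longrightarrow> sb @ u \<in> H \<Longrightarrow> lt (hd u) \<eta>" and c: "c \<in> H"
  shows "(kb lt (sb@[\<eta>,\<alpha>]) c \<longleftrightarrow> kb lt sb c) \<and> (kb lt c (sb@[\<eta>,\<alpha>]) \<longleftrightarrow> kb lt c sb)
    \<and> c \<noteq> sb@[\<eta>,\<alpha>]"
proof -
  have cne: "c \<noteq> sb" using nb c by auto
  have cna: "c \<noteq> sb@[\<eta>,\<alpha>]" using hd[of "[\<eta>,\<alpha>]"] c irr by auto
  have ext: "kb lt (sb@[\<eta>,\<alpha>]) sb" using kb_ext by simp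
  show ?thesis
  proof (cases "kb lt sb c")
    case True
    then have "kb lt (sb@[\<eta>,\<alpha>]) c" using ext kb_trans by blast
    then show ?thesis using True kb_asym cna by blast
  next
    case False
    then have cs: "kb lt c sb" using kb_total cne by blast
    have "kb lt c (sb@[\<eta>,\<alpha>])"
    proof (cases "\<exists>u. c = sb @ u")
      case True
      then obtain u where u: "c = sb @ u" by blast
      then have "u \<noteq> []" using cne by auto
      then obtain \<gamma> u' where "u = \<gamma> # u'" by (cases u) auto
      moreover have "lt (hd u) \<eta>" using hd \<open>u \<noteq> []\<close> u c by blast
      ultimately show ?thesis using u kb_append[of sb u "[\<eta>,\<alpha>]"] by simp
    next
      case False
      then show ?thesis using kb_notpre[OF False, of "[\<eta>,\<alpha>]"] cs by simp
    qed
    then show ?thesis using False cs kb_asym cna by blast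
  qed
qed

end


definition pre_len :: "'k list set \<Rightarrow> 'k list \<Rightarrow> nat" where
  "pre_len P s = (GREATEST k. k \<le> length s \<and> take k s \<in> P)"

lemma pre_len_props:
  assumes "[] \<in> P"
  shows "pre_len P s \<le> length s" "take (pre_len P s) s \<in> P"
    "\<And>k. k \<le> length s \<Longrightarrow> take k s \<in> P \<Longrightarrow> k \<le> pre_len P s"
proof -
  let ?Q = "\<lambda>k. k \<le> length s \<and> take k s \<in> P"
  have q0: "?Q 0" using assms by simp
  have "?Q (Greatest ?Q)" by (rule GreatestI_nat[of ?Q 0 "length s"]) (use q0 in auto)
  then show "pre_len P s \<le> length s" "take (pre_len P s) s \<in> P" unfolding pre_len_def by auto
  show "\<And>k. k \<le> length s \<Longrightarrow> take k s \<in> P \<Longrightarrow> k \<le> pre_len P s"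
    unfolding pre_len_def by (rule Greatest_le_nat[of ?Q _ "length s"]) auto
qed

sublocale kctx \<subseteq> slo "olt r" by (rule olt_slo)

context kctx begin

definition cutv :: "'k list set \<Rightarrow> 'k list \<Rightarrow> 'k \<Rightarrow> 'k option" where
  "cutv P p \<rho> = (if \<exists>\<xi>. p@[\<xi>] \<in> P \<and> olt r \<rho> \<xi>
     then Some (SOME \<zeta>. p@[\<zeta>] \<in> P \<and> olt r \<rho> \<zeta> \<and> (\<forall>\<xi>. p@[\<xi>] \<in> P \<and> olt r \<rho> \<xi> \<longrightarrow> \<not> olt r \<xi> \<zeta>))
     else None)"

lemma cutv_some:
  assumes "\<exists>\<xi>. p@[\<xi>] \<in> P \<and> olt r \<rho> \<xi>"
  shows "cutv P p \<rho> = Some (SOME \<zeta>. p@[\<zeta>] \<in> P \<and> olt r \<rho> \<zeta> \<and> (\<forall>\<xi>. p@[\<xi>] \<in> P \<and> olt r \<rho> \<xi> \<longrightarrow> \<not> olt r \<xi> \<zeta>))"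
    "\<exists>\<zeta>. p@[\<zeta>] \<in> P \<and> olt r \<rho> \<zeta> \<and> (\<forall>\<xi>. p@[\<xi>] \<in> P \<and> olt r \<rho> \<xi> \<longrightarrow> \<not> olt r \<xi> \<zeta>)"
proof -
  show "cutv P p \<rho> = Some (SOME \<zeta>. p@[\<zeta>] \<in> P \<and> olt r \<rho> \<zeta> \<and> (\<forall>\<xi>. p@[\<xi>] \<in> P \<and> olt r \<rho> \<xi> \<longrightarrow> \<not> olt r \<xi> \<zeta>))"
    using assms unfolding cutv_def by simp
  from assms obtain x where "p@[x] \<in> P \<and> olt r \<rho> x" by blast
  then show "\<exists>\<zeta>. p@[\<zeta>] \<in> P \<and> olt r \<rho> \<zeta> \<and> (\<forall>\<xi>. p@[\<xi>] \<in> P \<and> olt r \<rho> \<xi> \<longrightarrow> \<not> olt r \<xi> \<zeta>)"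
    using olt_min[of "\<lambda>z. p@[z] \<in> P \<and> olt r \<rho> z" x] by blast
qed

lemma cutv_eq:
  assumes "cutv P p \<rho>1 = cutv P p \<rho>2" "p@[\<xi>] \<in> P"
  shows "olt r \<rho>1 \<xi> \<longleftrightarrow> olt r \<rho>2 \<xi>"
proof (cases "\<exists>\<xi>. p@[\<xi>] \<in> P \<and> olt r \<rho>1 \<xi>")
  case True
  note t1 = cutv_some[OF True]
  then have "\<exists>\<xi>. p@[\<xi>] \<in> P \<and> olt r \<rho>2 \<xi>" using assms(1) unfolding cutv_def by (auto split: if_splits)
  note t2 = cutv_some[OF this]
  let ?z = "SOME \<zeta>. p@[\<zeta>] \<in> P \<and> olt r \<rho>1 \<zeta> \<and> (\<forall>\<xi>. p@[\<xi>] \<in> P \<and> olt r \<rho>1 \<xi> \<longrightarrow> \<not> olt r \<xi> \<zeta>)"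
  have z1: "p@[?z] \<in> P \<and> olt r \<rho>1 ?z \<and> (\<forall>\<xi>. p@[\<xi>] \<in> P \<and> olt r \<rho>1 \<xi> \<longrightarrow> \<not> olt r \<xi> ?z)"
    using someI_ex[OF t1(2)] .
  let ?z2 = "SOME \<zeta>. p@[\<zeta>] \<in> P \<and> olt r \<rho>2 \<zeta> \<and> (\<forall>\<xi>. p@[\<xi>] \<in> P \<and> olt r \<rho>2 \<xi> \<longrightarrow> \<not> olt r \<xi> \<zeta>)"
  have z2: "p@[?z2] \<in> P \<and> olt r \<rho>2 ?z2 \<and> (\<forall>\<xi>. p@[\<xi>] \<in> P \<and> olt r \<rho>2 \<xi> \<longrightarrow> \<not> olt r \<xi> ?z2)"
    using someI_ex[OF t2(2)] .
  have zz: "?z = ?z2" using assms(1) t1(1) t2(1) by simp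
  show ?thesis
  proof
    assume "olt r \<rho>1 \<xi>"
    then have "\<not> olt r \<xi> ?z" using z1 assms(2) by blast
    then have "?z = \<xi> \<or> olt r ?z \<xi>" using tot by blast
    then show "olt r \<rho>2 \<xi>"
    proof
      assume "?z = \<xi>" then show ?thesis using z2 zz by simp
    next
      assume "olt r ?z \<xi>" then show ?thesis using z2 zz tr[of \<rho>2 ?z2 \<xi>] by simp
    qed
  next
    assume "olt r \<rho>2 \<xi>"
    then have "\<not> olt r \<xi> ?z2" using z2 assms(2) by blast
    then have "?z2 = \<xi> \<or> olt r ?z2 \<xi>" using tot by blast
    then show "olt r \<rho>1 \<xi>"
    proof
      assume "?z2 = \<xi>" then show ?thesis using z1 zz by simp
    next
      assume "olt r ?z2 \<xi>" then show ?thesis using z1 zz tr[of \<rho>1 ?z \<xi>] by simp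
    qed
  qed
next
  case False
  then have "cutv P p \<rho>1 = None" unfolding cutv_def by simp
  then have "\<not> (\<exists>\<xi>. p@[\<xi>] \<in> P \<and> olt r \<rho>2 \<xi>)" using assms(1) unfolding cutv_def by (auto split: if_splits)
  then show ?thesis using False assms(2) by blast
qed

definition sig :: "'k list set \<Rightarrow> 'k list \<Rightarrow> 'k list \<times> 'k option option" where
  "sig P s = (take (pre_len P s) s,
     if pre_len P s = length s then None else Some (cutv P (take (pre_len P s) s) (s ! pre_len P s)))"

lemma sig_same:
  assumes pc: "pclosed P" and e: "[] \<in> P" and eq: "sig P s1 = sig P s2" and c: "c \<in> P"
  shows "(kb (olt r) s1 c \<longleftrightarrow> kb (olt r) s2 c) \<and> (kb (olt r) c s1 \<longleftrightarrow> kb (olt r) c s2) \<and> (c = s1 \<longleftrightarrow> c = s2)"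
proof -
  define n1 where "n1 = pre_len P s1"
  define n2 where "n2 = pre_len P s2"
  note p1 = pre_len_props[OF e, where s=s1, folded n1_def]
  note p2 = pre_len_props[OF e, where s=s2, folded n2_def]
  define p where "p = take n1 s1"
  have tp: "take n2 s2 = p" using eq unfolding sig_def p_def n1_def n2_def by simp
  have ln1: "length p = n1" using p1(1) unfolding p_def by simp
  have "length (take n2 s2) = n2" using p2(1) by simp
  then have ln: "length p = n1" "n2 = n1" using ln1 tp by auto
  show ?thesis
  proof (cases "n1 = length s1")
    case True
    then have "sig P s1 = (p, None)" unfolding sig_def p_def n1_def by simp
    then have "n2 = length s2" using eq unfolding sig_def n2_def by (auto split: if_splits)
    then have "s1 = s2" using True tp p_def by simp
    then show ?thesis by simp
  next
    case False
    then have "sig P s1 = (p, Some (cutv P p (s1 ! n1)))" unfolding sig_def p_def n1_def by simp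
    then have n2l: "n2 \<noteq> length s2" and cv: "cutv P p (s1 ! n1) = cutv P p (s2 ! n1)"
      using eq ln tp unfolding sig_def n2_def by (auto split: if_splits)
    have l1: "n1 < length s1" using False p1(1) by simp
    have l2: "n1 < length s2" using n2l p2(1) ln by simp
    have s1e: "s1 = p @ (s1 ! n1) # drop (Suc n1) s1" unfolding p_def using l1 id_take_nth_drop by blast
    have s2e: "s2 = p @ (s2 ! n1) # drop (Suc n1) s2" using tp ln l2 id_take_nth_drop by metis
    have np1: "p @ [s1 ! n1] \<notin> P"
    proof
      assume a: "p @ [s1 ! n1] \<in> P"
      have "take (Suc n1) s1 = p @ [s1 ! n1]" using l1 unfolding p_def by (simp add: take_Suc_conv_app_nth)
      then have "Suc n1 \<le> n1" using p1(3)[of "Suc n1"] a l1 by simp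
      then show False by simp
    qed
    have np2: "p @ [s2 ! n1] \<notin> P"
    proof
      assume a: "p @ [s2 ! n1] \<in> P"
      have "take (Suc n1) s2 = p @ [s2 ! n1]" using l2 tp ln by (simp add: take_Suc_conv_app_nth)
      then have "Suc n1 \<le> n1" using p2(3)[of "Suc n1"] a l2 ln by simp
      then show False by simp
    qed
    show ?thesis
      by (rule sig_rel[OF pc s1e s2e np1 np2 _ c]) (rule cutv_eq[OF cv])
  qed
qed

lemma sig_range:
  assumes e: "[] \<in> P"
  shows "sig P s \<in> P \<times> ({None} \<union> Some ` ({None} \<union> Some ` (last ` P)))"
proof -
  have "take (pre_len P s) s \<in> P" using pre_len_props[OF e] by blast
  moreover have "cutv P p \<rho> \<in> {None} \<union> Some ` (last ` P)" for p \<rho>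
  proof (cases "\<exists>\<xi>. p@[\<xi>] \<in> P \<and> olt r \<rho> \<xi>")
    case True
    note t = cutv_some[OF True]
    define z where "z = (SOME \<zeta>. p@[\<zeta>] \<in> P \<and> olt r \<rho> \<zeta> \<and> (\<forall>\<xi>. p@[\<xi>] \<in> P \<and> olt r \<rho> \<xi> \<longrightarrow> \<not> olt r \<xi> \<zeta>))"
    have "p@[z] \<in> P" using someI_ex[OF t(2)] unfolding z_def by blast
    then have "last (p@[z]) \<in> last ` P" by (rule imageI)
    then have "z \<in> last ` P" by simp
    then have "(SOME \<zeta>. p@[\<zeta>] \<in> P \<and> olt r \<rho> \<zeta> \<and> (\<forall>\<xi>. p@[\<xi>] \<in> P \<and> olt r \<rho> \<xi> \<longrightarrow> \<not> olt r \<xi> \<zeta>)) \<in> last ` P"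
      unfolding z_def .
    then show ?thesis using t(1) by simp
  next
    case False then show ?thesis unfolding cutv_def by (simp only: if_False) simp
  qed
  ultimately have q: "take (pre_len P s) s \<in> P" and
    cv: "cutv P (take (pre_len P s) s) (s ! pre_len P s) \<in> {None} \<union> Some ` (last ` P)" by blast+
  have ifc: "(if pre_len P s = length s then None else Some (cutv P (take (pre_len P s) s) (s ! pre_len P s)))
     \<in> {None} \<union> Some ` ({None} \<union> Some ` last ` P)"
  proof (cases "pre_len P s = length s")
    case True then show ?thesis by simp
  next
    case False
    have "Some (cutv P (take (pre_len P s) s) (s ! pre_len P s)) \<in> Some ` ({None} \<union> Some ` last ` P)"
      using cv by (rule imageI)
    then show ?thesis using False by simp
  qed
  show ?thesis unfolding sig_def using q ifc by blast
qed

end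


locale kenc = kctx r for r :: "'k rel" +
  fixes enc :: "'k list \<Rightarrow> 'k"
  assumes inj: "inj enc"
begin

definition I :: "'k set" where "I = range enc"
definition L :: "'k rel" where "L = {(enc s, enc t) | s t. kb (olt r) s t}"
definition dec :: "'k \<Rightarrow> 'k list" where "dec = inv enc"

lemma eq_enc: "enc s = enc t \<longleftrightarrow> s = t" using inj by (auto dest: injD)

lemma Lrel: "(enc s, enc t) \<in> L \<longleftrightarrow> kb (olt r) s t"
  unfolding L_def using eq_enc by auto

lemma dec_enc[simp]: "dec (enc s) = s" unfolding dec_def using inj by simp

lemma enc_dec: "x \<in> I \<Longrightarrow> enc (dec x) = x" unfolding dec_def I_def by (simp add: f_inv_into_f)

lemma enc_I[simp]: "enc s \<in> I" unfolding I_def by simp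

lemma L_sub: "L \<subseteq> I \<times> I" unfolding L_def I_def by auto

lemma L_slo: "strict_linear_order_on I L"
  unfolding strict_linear_order_on_def
proof (intro conjI)
  show "trans L" unfolding trans_def
  proof (intro allI impI)
    fix x y z assume "(x,y) \<in> L" "(y,z) \<in> L"
    then obtain s t t' u where "x = enc s" "y = enc t" "kb (olt r) s t" "y = enc t'" "z = enc u" "kb (olt r) t' u"
      unfolding L_def by blast
    then show "(x,z) \<in> L" using eq_enc Lrel kb_trans by metis
  qed
  show "irrefl L" unfolding irrefl_def
  proof
    fix x show "(x,x) \<notin> L"
    proof
      assume "(x,x) \<in> L"
      then obtain s t where "x = enc s" "x = enc t" "kb (olt r) s t" unfolding L_def by blast
      then show False using eq_enc kb_irr by metis
    qed
  qed
  show "total_on I L" unfolding total_on_def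
  proof (intro ballI impI)
    fix x y assume "x \<in> I" "y \<in> I" "x \<noteq> y"
    then obtain s t where "x = enc s" "y = enc t" unfolding I_def by blast
    then show "(x, y) \<in> L \<or> (y, x) \<in> L" using Lrel kb_total \<open>x \<noteq> y\<close> by metis
  qed
qed

lemma card_I: "|I| =o r"
proof -
  have "|I| \<le>o |UNIV :: 'k set|" by (rule card_of_mono1) simp
  moreover have "|UNIV :: 'k set| \<le>o |I|"
  proof -
    have "inj_on (\<lambda>x. enc [x]) UNIV \<and> (\<lambda>x. enc [x]) ` UNIV \<subseteq> I"
      using eq_enc by (auto simp: inj_on_def)
    then show ?thesis using card_of_ordLeq by blast
  qed
  ultimately have "|I| =o |UNIV :: 'k set|" using ordIso_iff_ordLeq by blast
  then show ?thesis using UNIV_iso ordIso_transitive by blast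
qed

lemma rel_tp1:
  assumes "\<And>c. c \<in> dec ` B \<Longrightarrow> (kb (olt r) s1 c \<longleftrightarrow> kb (olt r) s2 c) \<and> (kb (olt r) c s1 \<longleftrightarrow> kb (olt r) c s2) \<and> (c = s1 \<longleftrightarrow> c = s2)"
    and "B \<subseteq> I"
  shows "tp_bs L [enc s1] B = tp_bs L [enc s2] B"
proof (rule tp1_eq)
  fix d assume d: "d \<in> B"
  then have dd: "d = enc (dec d)" using enc_dec assms(2) by auto
  have "dec d \<in> dec ` B" using d by simp
  note a = assms(1)[OF this]
  show "(enc s1 = d \<longleftrightarrow> enc s2 = d) \<and> ((enc s1, d) \<in> L \<longleftrightarrow> (enc s2, d) \<in> L) \<and> ((d, enc s1) \<in> L \<longleftrightarrow> (d, enc s2) \<in> L)"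
    by (subst (1 2 3 4 5 6) dd) (use a eq_enc Lrel in metis)
next
  show "(enc s1, enc s1) \<in> L \<longleftrightarrow> (enc s2, enc s2) \<in> L" using Lrel kb_irr by simp
qed

lemma stable: "stable_bs r I L"
  unfolding stable_bs_def
proof (intro allI impI, elim conjE)
  fix B assume BI: "B \<subseteq> I" and sB: "small B"
  define H where "H = dec ` B"
  define P where "P = insert [] (\<Union>c\<in>H. (\<lambda>k. take k c) ` {..length c})"
  have e: "[] \<in> P" unfolding P_def by simp
  have pc: "pclosed P" unfolding pclosed_def
  proof (intro ballI allI)
    fix c k assume "c \<in> P"
    then show "take k c \<in> P"
    proof (cases "c = []")
      case False
      with \<open>c \<in> P\<close> obtain c0 j where "c0 \<in> H" "j \<le> length c0" "c = take j c0" unfolding P_def by auto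
      then have "take k c = take (min k j) c0" "min k j \<le> length c0" by (auto simp: min_def)
      then show ?thesis unfolding P_def using \<open>c0 \<in> H\<close> by blast
    qed (simp add: e)
  qed
  have HP: "H \<subseteq> P"
  proof
    fix c assume "c \<in> H" then have "take (length c) c \<in> P" unfolding P_def by blast
    then show "c \<in> P" by simp
  qed
  have sH: "small H" unfolding H_def using sB by (rule small_image)
  have sP: "small P"
  proof -
    have u: "small (\<Union>c\<in>H. (\<lambda>k. take k c) ` {..length c})"
      by (rule small_UN[OF sH]) (rule small_finite, simp)
    have "small ({[]} \<union> (\<Union>c\<in>H. (\<lambda>k. take k c) ` {..length c}))"
      by (rule small_Un[OF small_finite u]) simp
    then show ?thesis unfolding P_def by simp
  qed
  define R where "R = P \<times> ({None} \<union> Some ` ({None} \<union> Some ` (last ` P)))"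
  have sR: "small R"
  proof -
    have v: "small ({None} \<union> Some ` (last ` P))" by (rule small_Un[OF small_finite small_image[OF small_image[OF sP]]]) simp
    have "small ({None} \<union> Some ` ({None} \<union> Some ` (last ` P)))"
      by (rule small_Un[OF small_finite small_image[OF v]]) simp
    then show ?thesis unfolding R_def by (rule small_Times[OF sP])
  qed
  have sub: "{tp_bs L [a] B | a. a \<in> I} \<subseteq> (\<lambda>\<sigma>. tp_bs L [enc (SOME s. sig P s = \<sigma>)] B) ` R"
  proof
    fix T assume "T \<in> {tp_bs L [a] B | a. a \<in> I}"
    then obtain s where T: "T = tp_bs L [enc s] B" unfolding I_def by auto
    define s' where "s' = (SOME s'. sig P s' = sig P s)"
    have ss: "sig P s' = sig P s" unfolding s'_def by (rule someI) (rule refl)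
    have "tp_bs L [enc s'] B = tp_bs L [enc s] B"
      by (rule rel_tp1[OF _ BI]) (use sig_same[OF pc e ss] HP H_def in blast)
    moreover have "sig P s \<in> R" unfolding R_def using sig_range[OF e] .
    ultimately show "T \<in> (\<lambda>\<sigma>. tp_bs L [enc (SOME s. sig P s = \<sigma>)] B) ` R"
      using T unfolding s'_def by (intro image_eqI[where x="sig P s"]) simp_all
  qed
  show "small {tp_bs L [a] B | a. a \<in> I}"
    using small_subset[OF small_image[OF sR] sub] .
qed

definition Fc :: "'k \<Rightarrow> 'k" where "Fc x = last (dec x)"

lemma colorable: "colorable r I L"
  unfolding colorable_def
proof (intro exI[of _ Fc] allI impI ballI, elim conjE)
  fix B b \<alpha> assume BI: "B \<subseteq> I" and sB: "small B" and b: "b \<in> I - B"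
  define S where "S = {a \<in> I. tp_bs L [a] B = tp_bs L [b] B \<and> Fc a = \<alpha>}"
  define H where "H = dec ` B"
  define sb where "sb = dec b"
  have bsb: "b = enc sb" unfolding sb_def using b enc_dec by auto
  have nb: "sb \<notin> H"
  proof
    assume "sb \<in> H"
    then obtain x where "x \<in> B" "sb = dec x" unfolding H_def by auto
    then have "x = b" using bsb enc_dec BI by auto
    then show False using b \<open>x \<in> B\<close> by simp
  qed
  define K where "K = {hd u | u. u \<noteq> [] \<and> sb @ u \<in> H}"
  have "K \<subseteq> (\<lambda>c. c ! length sb) ` H"
  proof
    fix k assume "k \<in> K"
    then obtain u where "u \<noteq> []" "sb @ u \<in> H" "k = hd u" unfolding K_def by blast
    then have "k = (sb @ u) ! length sb" by (cases u) auto
    then show "k \<in> (\<lambda>c. c ! length sb) ` H" using \<open>sb @ u \<in> H\<close> by blast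
  qed
  moreover have "small ((\<lambda>c. c ! length sb) ` H)" unfolding H_def by (intro small_image sB)
  ultimately have "small K" using small_subset by blast
  then obtain \<gamma> where g: "\<And>k. k \<in> K \<Longrightarrow> \<not> olt r \<gamma> k" using bound by blast
  define U where "U = {\<eta>. olt r \<gamma> \<eta>}"
  define m where "m \<eta> = enc (sb @ [\<eta>, \<alpha>])" for \<eta>
  have hd: "olt r (hd u) \<eta>" if "\<eta> \<in> U" "u \<noteq> []" "sb @ u \<in> H" for \<eta> u
  proof -
    have "hd u \<in> K" unfolding K_def using that by blast
    then have "hd u = \<gamma> \<or> olt r (hd u) \<gamma>" using g tot by blast
    then show ?thesis using that(1) tr unfolding U_def by blast
  qed
  have mS: "m ` U \<subseteq> S"
  proof
    fix a assume "a \<in> m ` U"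
    then obtain \<eta> where \<eta>: "\<eta> \<in> U" "a = m \<eta>" by blast
    have "tp_bs L [enc (sb @ [\<eta>, \<alpha>])] B = tp_bs L [enc sb] B"
    proof (rule rel_tp1[OF _ BI])
      fix c assume c: "c \<in> dec ` B"
      have "c \<noteq> sb" using nb c H_def by auto
      then show "(kb (olt r) (sb @ [\<eta>, \<alpha>]) c \<longleftrightarrow> kb (olt r) sb c) \<and> (kb (olt r) c (sb @ [\<eta>, \<alpha>]) \<longleftrightarrow> kb (olt r) c sb)
          \<and> (c = sb @ [\<eta>, \<alpha>] \<longleftrightarrow> c = sb)"
        using color_list[OF nb, of \<eta> c \<alpha>] hd[OF \<eta>(1)] c H_def by blast
    qed
    then show "a \<in> S" unfolding S_def Fc_def using \<eta> bsb m_def by simp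
  qed
  have "inj_on m U" unfolding m_def inj_on_def using eq_enc by simp
  then have "|U| \<le>o |S|" using mS card_of_ordLeq by blast
  moreover have "r \<le>o |U|" unfolding U_def using big_ge not_small_above by blast
  ultimately have "r \<le>o |S|" using ordLeq_transitive by blast
  moreover have "|S| \<le>o r"
  proof -
    have "|S| \<le>o |I|" by (rule card_of_mono1) (auto simp: S_def)
    then show ?thesis using card_I ordLeq_ordIso_trans by blast
  qed
  ultimately show "|{a \<in> I. tp_bs L [a] B = tp_bs L [b] B \<and> Fc a = \<alpha>}| =o r"
    unfolding S_def[symmetric] using ordIso_iff_ordLeq by blast
qed

end


context slo begin
lemma dclosed_local:
  assumes "\<And>s. s \<in> S \<Longrightarrow> \<exists>S'. dclosed S' \<and> s \<in> S' \<and> S' \<subseteq> S"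
  shows "dclosed S"
  unfolding dclosed_def pclosed_def
proof (intro conjI ballI allI impI)
  fix c k assume "c \<in> S"
  then obtain S' where "dclosed S'" "c \<in> S'" "S' \<subseteq> S" using assms by blast
  then show "take k c \<in> S" unfolding dclosed_def pclosed_def by blast
next
  fix s k \<xi> assume "s \<in> S" "k < length s" "\<not> lt (s ! k) \<xi>"
  moreover obtain S' where "dclosed S'" "s \<in> S'" "S' \<subseteq> S" using assms \<open>s \<in> S\<close> by blast
  ultimately show "take k s @ [\<xi>] \<in> S" unfolding dclosed_def by blast
qed
end

context kenc begin

definition cl :: "'k list set \<Rightarrow> 'k list set" where
  "cl S = {take k s | s k. s \<in> S} \<union> {take k s @ [\<xi>] | s k \<xi>. s \<in> S \<and> k < length s \<and> \<not> olt r (s!k) \<xi>}"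

lemma small_cl: assumes "small S" shows "small (cl S)"
proof -
  have "cl S \<subseteq> (\<Union>s\<in>S. (\<lambda>k. take k s) ` {..length s} \<union>
      (\<Union>k\<in>{..<length s}. (\<lambda>\<xi>. take k s @ [\<xi>]) ` {\<xi>. \<not> olt r (s!k) \<xi>}))"
  proof
    fix y assume "y \<in> cl S"
    then consider (a) s k where "s \<in> S" "y = take k s"
      | (b) s k \<xi> where "s \<in> S" "k < length s" "\<not> olt r (s!k) \<xi>" "y = take k s @ [\<xi>]"
      unfolding cl_def by blast
    then show "y \<in> (\<Union>s\<in>S. (\<lambda>k. take k s) ` {..length s} \<union>
      (\<Union>k\<in>{..<length s}. (\<lambda>\<xi>. take k s @ [\<xi>]) ` {\<xi>. \<not> olt r (s!k) \<xi>}))"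
    proof cases
      case a
      then have "y = take (min k (length s)) s" by (simp add: min_def)
      then show ?thesis using a(1) by fastforce
    next
      case b then show ?thesis by blast
    qed
  qed
  moreover have "small (\<Union>s\<in>S. (\<lambda>k. take k s) ` {..length s} \<union>
      (\<Union>k\<in>{..<length s}. (\<lambda>\<xi>. take k s @ [\<xi>]) ` {\<xi>. \<not> olt r (s!k) \<xi>}))"
  proof (rule small_UN[OF assms])
    fix s :: "'k list"
    have a: "small ((\<lambda>k. take k s) ` {..length s})" by (rule small_finite) simp
    have b: "small (\<Union>k\<in>{..<length s}. (\<lambda>\<xi>. take k s @ [\<xi>]) ` {\<xi>. \<not> olt r (s!k) \<xi>})"
      by (rule small_UN[OF small_finite]) (simp_all add: small_image small_notabove)
    show "small ((\<lambda>k. take k s) ` {..length s} \<union>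
      (\<Union>k\<in>{..<length s}. (\<lambda>\<xi>. take k s @ [\<xi>]) ` {\<xi>. \<not> olt r (s!k) \<xi>}))"
      by (rule small_Un[OF a b])
  qed
  ultimately show ?thesis using small_subset by blast
qed

lemma r_refl: "(a, a) \<in> r"
proof -
  have "Refl r" using WO by (simp add: well_order_on_def linear_order_on_def partial_order_on_def preorder_on_def)
  then show ?thesis using Fr by (simp add: refl_on_def)
qed

lemma r_trans: "(a, b) \<in> r \<Longrightarrow> (b, c) \<in> r \<Longrightarrow> (a, c) \<in> r"
proof -
  have "trans r" using WO by (simp add: well_order_on_def linear_order_on_def partial_order_on_def preorder_on_def)
  then show "(a, b) \<in> r \<Longrightarrow> (b, c) \<in> r \<Longrightarrow> (a, c) \<in> r" unfolding trans_def by blast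
qed

lemma olt_r: "olt r a b \<Longrightarrow> (a, b) \<in> r" by (simp add: olt_def)

lemma notolt_r: "\<not> olt r a b \<Longrightarrow> (b, a) \<in> r"
  using tot[of a b] r_refl olt_r by blast

lemma nice: "nice_bs r I L"
  unfolding nice_bs_def
proof (intro allI impI)
  fix As assume kr: "kappa_rep r I As"
  note k = kr[unfolded kappa_rep_def]
  have sub: "\<And>\<alpha>. As \<alpha> \<subseteq> I" and sm: "\<And>\<alpha>. small (As \<alpha>)"
    using conjunct1[OF k, rule_format] by blast+
  have mono: "\<And>\<alpha> \<beta>. (\<alpha>, \<beta>) \<in> r \<Longrightarrow> As \<alpha> \<subseteq> As \<beta>"
    using conjunct1[OF conjunct2[OF k], rule_format] .
  have cont: "\<And>\<delta>. is_limit r \<delta> \<Longrightarrow> As \<delta> = (\<Union>\<beta>\<in>{\<beta>. olt r \<beta> \<delta>}. As \<beta>)"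
    using conjunct1[OF conjunct2[OF conjunct2[OF k]], rule_format] .
  have un: "(\<Union>\<alpha>. As \<alpha>) = I"
    using conjunct2[OF conjunct2[OF conjunct2[OF k]]] .
  define T where "T \<delta> = dec ` As \<delta>" for \<delta>
  have encT: "enc s \<in> As \<delta>" if "s \<in> T \<delta>" for s \<delta>
  proof -
    from that obtain x where x: "x \<in> As \<delta>" "s = dec x" unfolding T_def by blast
    then have "x \<in> I" using sub by blast
    then have "enc s = x" using x(2) enc_dec by simp
    then show ?thesis using x(1) by simp
  qed
  have Tenc: "dec x \<in> T \<delta>" if "x \<in> As \<delta>" for x \<delta> using that unfolding T_def by blast
  have monoT: "T \<alpha> \<subseteq> T \<beta>" if "(\<alpha>, \<beta>) \<in> r" for \<alpha> \<beta> using mono[OF that] unfolding T_def by blast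
  define C where "C = {\<delta>. dclosed (T \<delta>)}"
  have club: "club r C" unfolding club_def
  proof (intro conjI allI impI)
    fix \<delta> assume "is_limit r \<delta> \<and> (\<forall>\<beta>. olt r \<beta> \<delta> \<longrightarrow> (\<exists>\<gamma>\<in>C. olt r \<beta> \<gamma> \<and> olt r \<gamma> \<delta>))"
    then have lim: "is_limit r \<delta>" and H: "\<And>\<beta>. olt r \<beta> \<delta> \<Longrightarrow> \<exists>\<gamma>\<in>C. olt r \<beta> \<gamma> \<and> olt r \<gamma> \<delta>" by blast+
    have "dclosed (T \<delta>)"
    proof (rule dclosed_local)
      fix s assume "s \<in> T \<delta>"
      then obtain x where x: "x \<in> As \<delta>" "s = dec x" unfolding T_def by blast
      then obtain \<beta> where "olt r \<beta> \<delta>" "x \<in> As \<beta>" using cont[OF lim] by blast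
      then obtain \<gamma> where "\<gamma> \<in> C" "olt r \<beta> \<gamma>" "olt r \<gamma> \<delta>" using H by blast
      then have "dclosed (T \<gamma>)" "s \<in> T \<gamma>" "T \<gamma> \<subseteq> T \<delta>"
        using C_def x \<open>x \<in> As \<beta>\<close> monoT[OF olt_r] Tenc by blast+
      then show "\<exists>S'. dclosed S' \<and> s \<in> S' \<and> S' \<subseteq> T \<delta>" by blast
    qed
    then show "\<delta> \<in> C" unfolding C_def by simp
  next
    fix \<alpha>
    have catch: "\<exists>i. X \<subseteq> As i" if "small X" "X \<subseteq> I" for X
    proof -
      have rc: "relChain r As" unfolding relChain_def using mono by blast
      have "X \<subseteq> (\<Union>i\<in>Field r. As i)" using that(2) un Fr by simp
      then show ?thesis using regularCard_UNION[OF CO reg rc _ that(1)] by blast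
    qed
    have "\<exists>\<beta>'. olt r \<beta> \<beta>' \<and> enc ` cl (T \<beta>) \<subseteq> As \<beta>'" for \<beta>
    proof -
      have "small (T \<beta>)" unfolding T_def using sm by (rule small_image)
      then have "small (enc ` cl (T \<beta>))" using small_cl small_image by blast
      moreover have "enc ` cl (T \<beta>) \<subseteq> I" by auto
      ultimately obtain i where i: "enc ` cl (T \<beta>) \<subseteq> As i" using catch by blast
      obtain \<eta> where \<eta>: "olt r \<beta> \<eta>" using exists_above by blast
      show ?thesis
      proof (cases "(i, \<eta>) \<in> r")
        case True then show ?thesis using \<eta> i mono by blast
      next
        case False
        then have "olt r \<eta> i" using tot[of \<eta> i] r_refl olt_r by blast
        then have "olt r \<beta> i" using \<eta> tr by blast
        then show ?thesis using i by blast
      qed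
    qed
    then obtain nx where nx: "\<And>\<beta>. olt r \<beta> (nx \<beta>) \<and> enc ` cl (T \<beta>) \<subseteq> As (nx \<beta>)" by metis
    define bs where "bs n = (nx ^^ n) \<alpha>" for n
    have bsS: "bs (Suc n) = nx (bs n)" for n unfolding bs_def by simp
    have inc: "olt r (bs n) (bs (Suc n))" for n using nx bsS by simp
    have clT: "cl (T (bs n)) \<subseteq> T (bs (Suc n))" for n
    proof
      fix y assume "y \<in> cl (T (bs n))"
      then have "enc y \<in> enc ` cl (T (bs n))" by (rule imageI)
      then have "enc y \<in> As (nx (bs n))" using nx[of "bs n"] by blast
      then have "enc y \<in> As (bs (Suc n))" using bsS by simp
      then have "dec (enc y) \<in> T (bs (Suc n))" by (rule Tenc)
      then show "y \<in> T (bs (Suc n))" by simp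
    qed
    have "small (range bs)" using small_image small_nat by blast
    then obtain \<gamma> where \<gamma>: "\<And>k. k \<in> range bs \<Longrightarrow> \<not> olt r \<gamma> k" using bound by blast
    have "olt r (bs n) \<gamma>" for n
    proof -
      have "\<not> olt r \<gamma> (bs (Suc n))" using \<gamma> by blast
      then have "bs (Suc n) = \<gamma> \<or> olt r (bs (Suc n)) \<gamma>" using tot by blast
      then show ?thesis using inc[of n] tr by metis
    qed
    then obtain \<delta> where \<delta>: "\<forall>n. olt r (bs n) \<delta>" "\<And>y. \<forall>n. olt r (bs n) y \<Longrightarrow> \<not> olt r y \<delta>"
      using olt_min[of "\<lambda>y. \<forall>n. olt r (bs n) y" \<gamma>] by blast
    have below: "\<exists>n. olt r \<beta> (bs n)" if "olt r \<beta> \<delta>" for \<beta>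
    proof -
      have "\<not> (\<forall>n. olt r (bs n) \<beta>)" using \<delta>(2) that by blast
      then obtain n where "\<not> olt r (bs n) \<beta>" by blast
      then have "\<beta> = bs n \<or> olt r \<beta> (bs n)" using tot by blast
      then show ?thesis using inc[of n] tr by metis
    qed
    have lim: "is_limit r \<delta>" unfolding is_limit_def
    proof (intro conjI allI impI)
      show "\<exists>\<beta>. olt r \<beta> \<delta>" using \<delta>(1) by blast
      fix \<beta> assume "olt r \<beta> \<delta>"
      then obtain n where "olt r \<beta> (bs n)" using below by blast
      then show "\<exists>\<gamma>. olt r \<beta> \<gamma> \<and> olt r \<gamma> \<delta>" using \<delta>(1) by blast
    qed
    have inT: "\<exists>n. s \<in> T (bs n)" if "s \<in> T \<delta>" for s
    proof -
      from that obtain x where x: "x \<in> As \<delta>" "s = dec x" unfolding T_def by blast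
      then obtain \<beta> where "olt r \<beta> \<delta>" "x \<in> As \<beta>" using cont[OF lim] by blast
      then obtain n where "olt r \<beta> (bs n)" using below by blast
      then have "x \<in> As (bs n)" using mono[OF olt_r] \<open>x \<in> As \<beta>\<close> by blast
      then show ?thesis using x Tenc by blast
    qed
    have Tsub: "T (bs n) \<subseteq> T \<delta>" for n using monoT[OF olt_r] \<delta>(1) by blast
    have "dclosed (T \<delta>)" unfolding dclosed_def pclosed_def
    proof (intro conjI ballI allI impI)
      fix c k assume "c \<in> T \<delta>"
      then obtain n where "c \<in> T (bs n)" using inT by blast
      then have "take k c \<in> cl (T (bs n))" unfolding cl_def by blast
      then show "take k c \<in> T \<delta>" using clT Tsub by blast
    next
      fix s k \<xi> assume "s \<in> T \<delta>" "k < length s" "\<not> olt r (s ! k) \<xi>"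
      moreover from \<open>s \<in> T \<delta>\<close> obtain n where "s \<in> T (bs n)" using inT by blast
      ultimately have "take k s @ [\<xi>] \<in> cl (T (bs n))" unfolding cl_def by blast
      then show "take k s @ [\<xi>] \<in> T \<delta>" using clT Tsub by blast
    qed
    moreover have "(\<alpha>, \<delta>) \<in> r" using \<delta>(1) olt_r unfolding bs_def by (metis funpow_0)
    ultimately show "\<exists>\<beta>\<in>C. (\<alpha>, \<beta>) \<in> r" unfolding C_def by blast
  qed
  have disj: "Sp_bs r L I As \<inter> C = {}"
  proof (rule ccontr)
    assume "Sp_bs r L I As \<inter> C \<noteq> {}"
    then obtain \<delta> where "\<delta> \<in> Sp_bs r L I As" "\<delta> \<in> C" by blast
    then obtain a where lim: "is_limit r \<delta>" and aI: "a \<in> I"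
      and spl: "\<And>\<beta>. olt r \<beta> \<delta> \<Longrightarrow> bs_splits L a (As \<delta>) (As \<beta>)" and dc: "dclosed (T \<delta>)"
      unfolding Sp_bs_def C_def by blast
    show False
    proof (cases "a \<in> As \<delta>")
      case True
      then obtain \<beta> where \<beta>: "olt r \<beta> \<delta>" "a \<in> As \<beta>" using cont[OF lim] by blast
      from spl[OF \<beta>(1)] obtain b1 b2 where "b1 \<in> As \<delta>" "b2 \<in> As \<delta>"
        and eq: "tp_bs L [b1] (As \<beta>) = tp_bs L [b2] (As \<beta>)"
        and ne: "tp_bs L [a, b1] (As \<beta>) \<noteq> tp_bs L [a, b2] (As \<beta>)"
        unfolding bs_splits_def by blast
      have f: "(b1 = a \<longleftrightarrow> b2 = a) \<and> ((b1,a)\<in>L \<longleftrightarrow> (b2,a)\<in>L) \<and> ((a,b1)\<in>L \<longleftrightarrow> (a,b2)\<in>L)"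
        using tp1_facts[OF eq \<beta>(2)] .
      have "tp_bs L [a, b1] (As \<beta>) = tp_bs L [a, b2] (As \<beta>)"
        by (rule tp2_eq[OF eq]) (use f in auto)
      then show False using ne by simp
    next
      case False
      define S where "S = T \<delta>"
      obtain \<beta>0 where "olt r \<beta>0 \<delta>" using lim unfolding is_limit_def by blast
      from spl[OF this] obtain b0 where "b0 \<in> As \<delta>" unfolding bs_splits_def by blast
      then have "dec b0 \<in> S" unfolding S_def using Tenc by blast
      then have e: "[] \<in> S" using dc unfolding S_def dclosed_def pclosed_def by (metis take_0)
      define sa where "sa = dec a"
      have asa: "a = enc sa" unfolding sa_def using enc_dec aI by simp
      define n where "n = pre_len S sa"
      note pp = pre_len_props[OF e, where s=sa, folded n_def]
      define p where "p = take n sa"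
      have pS: "p \<in> S" using pp(2) p_def by simp
      have nl: "n < length sa"
      proof (rule ccontr)
        assume "\<not> n < length sa"
        then have "p = sa" using pp(1) p_def by simp
        then have "enc sa \<in> As \<delta>" using pS encT S_def by blast
        then show False using False asa by simp
      qed
      define \<rho> where "\<rho> = sa ! n"
      have sae: "sa = p @ \<rho> # drop (Suc n) sa" unfolding p_def \<rho>_def using nl id_take_nth_drop by blast
      have np: "p @ [\<rho>] \<notin> S"
      proof
        assume a: "p @ [\<rho>] \<in> S"
        have "take (Suc n) sa = p @ [\<rho>]" using nl unfolding p_def \<rho>_def by (simp add: take_Suc_conv_app_nth)
        then have "Suc n \<le> n" using pp(3)[of "Suc n"] a nl by simp
        then show False by simp
      qed
      have "enc p \<in> As \<delta>" using pS encT S_def by blast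
      then obtain \<beta> where \<beta>: "olt r \<beta> \<delta>" "enc p \<in> As \<beta>" using cont[OF lim] by blast
      from spl[OF \<beta>(1)] obtain b1 b2 where b: "b1 \<in> As \<delta>" "b2 \<in> As \<delta>"
        and eq: "tp_bs L [b1] (As \<beta>) = tp_bs L [b2] (As \<beta>)"
        and ne: "tp_bs L [a, b1] (As \<beta>) \<noteq> tp_bs L [a, b2] (As \<beta>)"
        unfolding bs_splits_def by blast
      define c1 where "c1 = dec b1"
      define c2 where "c2 = dec b2"
      have "b1 \<in> I" "b2 \<in> I" using b sub by blast+
      then have bc: "b1 = enc c1" "b2 = enc c2" unfolding c1_def c2_def by (simp_all add: enc_dec)
      have cS: "c1 \<in> S" "c2 \<in> S" unfolding c1_def c2_def S_def using Tenc[OF b(1)] Tenc[OF b(2)] .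
      have f: "(b1 = enc p \<longleftrightarrow> b2 = enc p) \<and> ((b1, enc p)\<in>L \<longleftrightarrow> (b2, enc p)\<in>L) \<and> ((enc p, b1)\<in>L \<longleftrightarrow> (enc p, b2)\<in>L)"
        using tp1_facts[OF eq \<beta>(2)] .
      have ef: "c1 = p \<longleftrightarrow> c2 = p" "kb (olt r) c1 p \<longleftrightarrow> kb (olt r) c2 p"
        using f bc eq_enc Lrel by simp_all
      have dcS: "dclosed S" using dc S_def by simp
      have n1: "\<not> (kb (olt r) c1 sa \<and> kb (olt r) sa c2)"
        using nosplit_list[OF dcS sae np cS(1) cS(2) _ _ ef(1) ef(2)] by blast
      have n2: "\<not> (kb (olt r) c2 sa \<and> kb (olt r) sa c1)"
        using nosplit_list[OF dcS sae np cS(2) cS(1) _ _ ef(1)[symmetric] ef(2)[symmetric]] by blast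
      have "a \<noteq> b1" "a \<noteq> b2" using False b by auto
      then have "sa \<noteq> c1" "sa \<noteq> c2" using asa bc by auto
      then have t: "kb (olt r) c1 sa \<longleftrightarrow> \<not> kb (olt r) sa c1" "kb (olt r) c2 sa \<longleftrightarrow> \<not> kb (olt r) sa c2"
        using kb_total kb_asym by blast+
      have r1: "kb (olt r) sa c1 \<longleftrightarrow> kb (olt r) sa c2" using n1 n2 t by blast
      have r2: "kb (olt r) c1 sa \<longleftrightarrow> kb (olt r) c2 sa" using n1 n2 t by blast
      have "tp_bs L [a, b1] (As \<beta>) = tp_bs L [a, b2] (As \<beta>)"
      proof (rule tp2_eq[OF eq])
        show "a = b1 \<longleftrightarrow> a = b2" using \<open>a \<noteq> b1\<close> \<open>a \<noteq> b2\<close> by simp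
        show "(a, b1) \<in> L \<longleftrightarrow> (a, b2) \<in> L" using r1 asa bc Lrel by simp
        show "(b1, a) \<in> L \<longleftrightarrow> (b2, a) \<in> L" using r2 asa bc Lrel by simp
      qed
      then show False using ne by simp
    qed
  qed
  show "\<not> stationary r (Sp_bs r L I As)"
    unfolding stationary_def using club disj by blast
qed

end


primrec enc_l :: "('k \<times> 'k \<Rightarrow> 'k) \<Rightarrow> 'k \<Rightarrow> 'k \<Rightarrow> 'k list \<Rightarrow> 'k" where
  "enc_l g z d [] = z"
| "enc_l g z d (x # xs) = g (g (x, enc_l g z d xs), d)"

lemma enc_l_inj:
  assumes g: "inj g" and cd: "c \<noteq> d"
  shows "inj (enc_l g (g (c, c)) d)"
proof -
  have "enc_l g (g (c, c)) d xs = enc_l g (g (c, c)) d ys \<Longrightarrow> xs = ys" for xs ys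
  proof (induction xs arbitrary: ys)
    case Nil
    then show ?case using g cd by (cases ys) (auto dest: injD)
  next
    case (Cons x xs)
    then show ?case using g cd by (cases ys) (auto dest: injD)
  qed
  then show ?thesis by (rule injI)
qed

lemma exists_enc:
  assumes "\<not> finite (UNIV :: 'k set)"
  shows "\<exists>enc :: 'k list \<Rightarrow> 'k. inj enc"
proof -
  have "|(UNIV :: 'k set) \<times> (UNIV :: 'k set)| =o |UNIV :: 'k set|"
    using card_of_Times_same_infinite[OF assms] .
  then obtain g where "bij_betw g ((UNIV :: 'k set) \<times> (UNIV :: 'k set)) (UNIV :: 'k set)"
    using card_of_ordIso by blast
  then have g: "inj g" by (simp add: bij_betw_def)
  obtain c d :: 'k where "c \<noteq> d"
    using assms by (metis finite.emptyI finite_insert insertI1 subsetI subset_antisym UNIV_I)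
  then show ?thesis using enc_l_inj[OF g] by blast
qed

theorem mainTheorem7:
  fixes r :: "'k rel"
  assumes "card_order r"
    and "regularCard r"
    and "natLeq <o r"
    and "|SIGMA \<alpha>:(UNIV::'k set). Func (underS r \<alpha>) (UNIV::'k set)| =o r"
    and "\<forall>\<alpha>. |Func (UNIV::nat set) (underS r \<alpha>)| <o r"
  shows "\<exists>(I::'k set) (L::'k rel). L \<subseteq> I \<times> I \<and> strict_linear_order_on I L \<and> |I| =o r
           \<and> stable_bs r I L \<and> nice_bs r I L \<and> colorable r I L"
proof -
  interpret kctx r using assms(1-3) by unfold_locales
  have "\<not> finite (UNIV :: 'k set)" using inf Fr by simp
  then obtain enc :: "'k list \<Rightarrow> 'k" where "inj enc" using exists_enc by blast
  interpret kenc r enc by unfold_locales (rule \<open>inj enc\<close>)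
  show ?thesis using L_sub L_slo card_I stable nice colorable by blast
qed


end
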